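(* Let $\varrho=\sum_{\omega\in\Omega}\varrho(\omega)|\omega\rangle\langle\omega|$ and $\sigma=\sum_{\omega\in\Omega}\sigma(\omega)|\omega\rangle\langle\omega|$ be commuting density operators, diagonal in a common orthonormal basis $(|\omega\rangle)_{\omega\in\Omega}$ of a finite-dimensional Hilbert space. The following are equivalent: (1) $D_\alpha^{\mathrm{test}}(\varrho\|\sigma)=D_\alpha(\varrho\|\sigma)$ for all $\alpha\in(0,1)$; (2) $D_\alpha^{\mathrm{test}}(\varrho\|\sigma)=D_\alpha(\varrho\|\sigma)$ for some $\alpha\in(0,1)$; (3) there is $\Omega_0\subseteq\Omega$, with $\Omega_1:=\Omega\setminus\Omega_0$, such that $\sigma(\Omega_0)\varrho(\omega)=\varrho(\Omega_0)\sigma(\omega)$ for $\omega\in\Omega_0$ and $\sigma(\Omega_1)\varrho(\omega)=\varrho(\Omega_1)\sigma(\omega)$ for $\omega\in\Omega_1$. Moreover, if these hold then $D_\alpha^{\mathrm{test}}(\varrho\|\sigma)=\hat D_\alpha^{\mathrm{test}}(\varrho\|\sigma)=D_\alpha(\varrho\|\sigma)$ for all $\alpha\in(0,1)$.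
   Context: $\varrho(\Omega_0):=\sum_{\omega\in\Omega_0}\varrho(\omega)$, etc. For probability vectors $p,q$ and $\alpha\in(0,1)$, $D_\alpha(p\|q)=\frac{1}{\alpha-1}\log\sum_xp(x)^\alpha q(x)^{1-\alpha}$; for commuting states $D_\alpha(\varrho\|\sigma)$ is the classical divergence of the eigenvalue vectors. A test is an operator $0\le T\le I$; $\mathcal T(X):=(\operatorname{Tr}XT,\operatorname{Tr}X(I-T))$; $D_\alpha^{\mathrm{test}}(\varrho\|\sigma):=\max_{0\le T\le I}D_\alpha(\mathcal T(\varrho)\|\mathcal T(\sigma))$; $\hat D_\alpha^{\mathrm{test}}:=\sup_n\frac1nD_\alpha^{\mathrm{test}}(\varrho^{\otimes n}\|\sigma^{\otimes n})$. *)

theory Defs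
  imports "HOL-Analysis.Analysis" "HOL-Library.Extended_Real"
begin

text \<open>Operators on the Hilbert space with orthonormal basis indexed by a finite set I
  are represented by their matrices X :: 'b \<Rightarrow> 'b \<Rightarrow> complex (only entries in I \<times> I matter).\<close>

definition quad_form :: "'b set \<Rightarrow> ('b \<Rightarrow> 'b \<Rightarrow> complex) \<Rightarrow> ('b \<Rightarrow> complex) \<Rightarrow> complex" where
  "quad_form I X v = (\<Sum>i\<in>I. \<Sum>j\<in>I. cnj (v i) * X i j * v j)"

definition psd_op :: "'b set \<Rightarrow> ('b \<Rightarrow> 'b \<Rightarrow> complex) \<Rightarrow> bool" where
  "psd_op I X \<longleftrightarrow> (\<forall>v. Im (quad_form I X v) = 0 \<and> 0 \<le> Re (quad_form I X v))"

definition id_op :: "'b \<Rightarrow> 'b \<Rightarrow> complex" where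
  "id_op = (\<lambda>i j. if i = j then 1 else 0)"

definition is_test :: "'b set \<Rightarrow> ('b \<Rightarrow> 'b \<Rightarrow> complex) \<Rightarrow> bool" where
  "is_test I T \<longleftrightarrow> psd_op I T \<and> psd_op I (\<lambda>i j. id_op i j - T i j)"

definition tr_mult :: "'b set \<Rightarrow> ('b \<Rightarrow> 'b \<Rightarrow> complex) \<Rightarrow> ('b \<Rightarrow> 'b \<Rightarrow> complex) \<Rightarrow> complex" where
  "tr_mult I X T = (\<Sum>i\<in>I. \<Sum>j\<in>I. X i j * T j i)"

definition renyi_div :: "'c set \<Rightarrow> real \<Rightarrow> ('c \<Rightarrow> real) \<Rightarrow> ('c \<Rightarrow> real) \<Rightarrow> ereal" where
  "renyi_div A \<alpha> p q =
     (let s = (\<Sum>x\<in>A. p x powr \<alpha> * q x powr (1 - \<alpha>))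
      in if s = 0 then \<infinity> else ereal (ln s / (\<alpha> - 1)))"

definition test_meas :: "'b set \<Rightarrow> ('b \<Rightarrow> 'b \<Rightarrow> complex) \<Rightarrow> ('b \<Rightarrow> 'b \<Rightarrow> complex) \<Rightarrow> bool \<Rightarrow> real" where
  "test_meas I T X = (\<lambda>b. if b then Re (tr_mult I X T)
                          else Re (tr_mult I X (\<lambda>i j. id_op i j - T i j)))"

definition D_test :: "'b set \<Rightarrow> real \<Rightarrow> ('b \<Rightarrow> 'b \<Rightarrow> complex) \<Rightarrow> ('b \<Rightarrow> 'b \<Rightarrow> complex) \<Rightarrow> ereal" where
  "D_test I \<alpha> X Y = (SUP T\<in>{T. is_test I T}. renyi_div UNIV \<alpha> (test_meas I T X) (test_meas I T Y))"

definition diag_op :: "('a \<Rightarrow> real) \<Rightarrow> 'a \<Rightarrow> 'a \<Rightarrow> complex" where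
  "diag_op p = (\<lambda>i j. if i = j then complex_of_real (p i) else 0)"

text \<open>n-fold tensor power, with basis indexed by words of length n.\<close>
definition tensor_pow :: "nat \<Rightarrow> ('a \<Rightarrow> 'a \<Rightarrow> complex) \<Rightarrow> 'a list \<Rightarrow> 'a list \<Rightarrow> complex" where
  "tensor_pow n X = (\<lambda>xs ys. \<Prod>k<n. X (xs ! k) (ys ! k))"

definition words :: "nat \<Rightarrow> 'a list set" where
  "words n = {xs. length xs = n}"

definition D_test_reg :: "real \<Rightarrow> ('a \<Rightarrow> 'a \<Rightarrow> complex) \<Rightarrow> ('a \<Rightarrow> 'a \<Rightarrow> complex) \<Rightarrow> ereal" where
  "D_test_reg \<alpha> X Y = (SUP n\<in>{1..}. ereal (1 / real n) *
        D_test (words n) \<alpha> (tensor_pow n X) (tensor_pow n Y))"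

end

theory Submission
  imports Defs
begin

definition FF :: "real \<Rightarrow> real \<Rightarrow> real \<Rightarrow> real" where
  "FF a x y = x powr a * y powr (1 - a)"

lemma FF_nonneg: "0 \<le> FF a x y" by (simp add: FF_def)

lemma FF_zero_left: "0 < a \<Longrightarrow> FF a 0 y = 0" by (simp add: FF_def)
lemma FF_zero_right: "a < 1 \<Longrightarrow> FF a x 0 = 0" by (simp add: FF_def)

lemma FF_hom:
  assumes "0 \<le> c" "0 \<le> x" "0 \<le> y"
  shows "FF a (c * x) (c * y) = c * FF a x y"
proof (cases "c = 0")
  case True then show ?thesis by (simp add: FF_def)
next
  case False
  then have "c > 0" using assms by simp
  have "FF a (c * x) (c * y) = (c powr a * c powr (1 - a)) * (x powr a * y powr (1 - a))"
    using assms by (simp add: FF_def powr_mult)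
  also have "c powr a * c powr (1 - a) = c"
    using \<open>c > 0\<close> by (simp flip: powr_add)
  finally show ?thesis by (simp add: FF_def)
qed

lemma amgm:
  assumes "0 \<le> x" "0 \<le> y" "0 < a" "a < 1"
  shows "FF a x y \<le> a * x + (1 - a) * y"
proof (cases "x = 0 \<or> y = 0")
  case True then show ?thesis using assms by (auto simp: FF_def)
next
  case False
  then show ?thesis using Youngs_inequality_0[of a "1-a" x y] assms by (simp add: FF_def)
qed

lemma ln_eq_aux:
  fixes x :: real assumes "0 < x" shows "ln x \<le> x - 1" "ln x = x - 1 \<Longrightarrow> x = 1"
  using ln_le_minus_one[OF assms] ln_eq_minus_one[OF assms] by auto

lemma amgm_eq:
  assumes "0 \<le> x" "0 \<le> y" "0 < a" "a < 1" "FF a x y = a * x + (1 - a) * y"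
  shows "x = y"
proof (cases "x = 0 \<or> y = 0")
  case True then show ?thesis using assms by (auto simp: FF_def)
next
  case False
  then have xp: "x > 0" and yp: "y > 0" using assms by auto
  define m where "m = a * x + (1 - a) * y"
  have mp: "m > 0" using xp yp assms unfolding m_def
    by (smt (verit) mult_pos_pos)
  have "ln (FF a x y) = a * ln x + (1 - a) * ln y"
    using xp yp by (simp add: FF_def ln_mult ln_powr)
  then have e: "a * ln x + (1 - a) * ln y = ln m" using assms(5) m_def by simp
  have lx: "ln (x / m) = ln x - ln m" using xp mp by (simp add: ln_div)
  have ly: "ln (y / m) = ln y - ln m" using yp mp by (simp add: ln_div)
  have "a * ln (x / m) + (1 - a) * ln (y / m) = a * ln x + (1 - a) * ln y - ln m"
    unfolding lx ly by (simp add: algebra_simps)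
  then have s0: "a * ln (x / m) + (1 - a) * ln (y / m) = 0" using e by simp
  have s1: "a * (x / m - 1) + (1 - a) * (y / m - 1) = 0"
    using mp unfolding m_def by (simp add: field_simps)
  have i1: "ln (x / m) \<le> x / m - 1" using ln_eq_aux(1) xp mp by simp
  have i2: "ln (y / m) \<le> y / m - 1" using ln_eq_aux(1) yp mp by simp
  have "a * ln (x / m) \<le> a * (x / m - 1)" using i1 assms by simp
  moreover have "(1 - a) * ln (y / m) \<le> (1 - a) * (y / m - 1)" using i2 assms by simp
  ultimately have "a * ln (x / m) = a * (x / m - 1)" "(1 - a) * ln (y / m) = (1 - a) * (y / m - 1)"
    using s0 s1 by linarith+
  then have "ln (x / m) = x / m - 1" "ln (y / m) = y / m - 1" using assms by auto
  then have "x / m = 1" "y / m = 1" using ln_eq_aux(2)[of "x/m"] ln_eq_aux(2)[of "y/m"] xp yp mp by auto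
  then show ?thesis using mp by (simp add: divide_eq_1_iff)
qed

lemma FF_scale2:
  assumes "0 < X" "0 < Y" "0 \<le> u" "0 \<le> v"
  shows "FF a (X * u) (Y * v) = FF a X Y * FF a u v"
  using assms by (simp add: FF_def powr_mult)

lemma holder_gen:
  fixes x y :: "'b \<Rightarrow> real"
  assumes fin: "finite A" and nn: "\<And>i. i \<in> A \<Longrightarrow> 0 \<le> x i" "\<And>i. i \<in> A \<Longrightarrow> 0 \<le> y i"
    and a: "0 < a" "a < 1"
  shows "(\<Sum>i\<in>A. FF a (x i) (y i)) \<le> FF a (sum x A) (sum y A)"
    and "(\<Sum>i\<in>A. FF a (x i) (y i)) = FF a (sum x A) (sum y A) \<Longrightarrow>
          \<forall>i\<in>A. sum y A * x i = sum x A * y i"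
proof -
  define X where "X = sum x A"
  define Y where "Y = sum y A"
  have X0: "X \<ge> 0" "Y \<ge> 0" unfolding X_def Y_def using nn by (auto intro: sum_nonneg)
  have "(\<Sum>i\<in>A. FF a (x i) (y i)) \<le> FF a X Y \<and>
        ((\<Sum>i\<in>A. FF a (x i) (y i)) = FF a X Y \<longrightarrow> (\<forall>i\<in>A. Y * x i = X * y i))"
  proof (cases "X = 0 \<or> Y = 0")
    case True
    then show ?thesis
    proof
      assume "X = 0"
      then have "\<forall>i\<in>A. x i = 0" using fin nn unfolding X_def by (simp add: sum_nonneg_eq_0_iff)
      then show ?thesis using a \<open>X = 0\<close> by (simp add: FF_zero_left FF_nonneg)
    next
      assume "Y = 0"
      then have "\<forall>i\<in>A. y i = 0" using fin nn unfolding Y_def by (simp add: sum_nonneg_eq_0_iff)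
      then show ?thesis using a \<open>Y = 0\<close> by (simp add: FF_zero_right FF_nonneg)
    qed
  next
    case False
    then have Xp: "X > 0" "Y > 0" using X0 by auto
    have eq1: "FF a (x i) (y i) = FF a X Y * FF a (x i / X) (y i / Y)" if "i \<in> A" for i
      using FF_scale2[of X Y "x i / X" "y i / Y" a] Xp nn that by simp
    have S: "(\<Sum>i\<in>A. FF a (x i) (y i)) = FF a X Y * (\<Sum>i\<in>A. FF a (x i / X) (y i / Y))"
      by (simp add: eq1 sum_distrib_left)
    have T1: "(\<Sum>i\<in>A. a * (x i / X) + (1 - a) * (y i / Y)) = 1"
      using Xp unfolding X_def Y_def
      by (simp add: sum.distrib flip: sum_distrib_left sum_divide_distrib)
    have le: "FF a (x i / X) (y i / Y) \<le> a * (x i / X) + (1 - a) * (y i / Y)" if "i \<in> A" for i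
      using amgm[of "x i / X" "y i / Y" a] nn that Xp a by simp
    have L: "(\<Sum>i\<in>A. FF a (x i / X) (y i / Y)) \<le> 1"
    proof -
      have "(\<Sum>i\<in>A. FF a (x i / X) (y i / Y)) \<le> (\<Sum>i\<in>A. a * (x i / X) + (1 - a) * (y i / Y))"
        by (rule sum_mono) (rule le)
      then show ?thesis using T1 by simp
    qed
    have FXYp: "FF a X Y > 0" using Xp by (simp add: FF_def)
    show ?thesis
    proof
      show "(\<Sum>i\<in>A. FF a (x i) (y i)) \<le> FF a X Y"
        unfolding S using L FXYp by (simp add: mult_left_le)
    next
      show "(\<Sum>i\<in>A. FF a (x i) (y i)) = FF a X Y \<longrightarrow> (\<forall>i\<in>A. Y * x i = X * y i)"
      proof
        assume "(\<Sum>i\<in>A. FF a (x i) (y i)) = FF a X Y"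
        then have "(\<Sum>i\<in>A. FF a (x i / X) (y i / Y)) = 1" unfolding S using FXYp by simp
        then have "(\<Sum>i\<in>A. (a * (x i / X) + (1 - a) * (y i / Y)) - FF a (x i / X) (y i / Y)) = 0"
          using T1 by (simp add: sum_subtractf)
        then have "\<forall>i\<in>A. (a * (x i / X) + (1 - a) * (y i / Y)) - FF a (x i / X) (y i / Y) = 0"
          using sum_nonneg_eq_0_iff[OF fin] le by (smt (verit, ccfv_SIG))
        then have "\<forall>i\<in>A. x i / X = y i / Y"
          using amgm_eq nn Xp a by (smt (verit) divide_nonneg_pos)
        then show "\<forall>i\<in>A. Y * x i = X * y i" using Xp by (simp add: field_simps)
      qed
    qed
  qed
  then show "(\<Sum>i\<in>A. FF a (x i) (y i)) \<le> FF a (sum x A) (sum y A)"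
    and "(\<Sum>i\<in>A. FF a (x i) (y i)) = FF a (sum x A) (sum y A) \<Longrightarrow>
          \<forall>i\<in>A. sum y A * x i = sum x A * y i" unfolding X_def Y_def by auto
qed

lemma holder_prop:
  fixes x y :: "'b \<Rightarrow> real"
  assumes fin: "finite A" and nn: "\<And>i. i \<in> A \<Longrightarrow> 0 \<le> x i" "\<And>i. i \<in> A \<Longrightarrow> 0 \<le> y i"
    and a: "0 < a" "a < 1"
    and pr: "\<forall>i\<in>A. sum y A * x i = sum x A * y i"
  shows "(\<Sum>i\<in>A. FF a (x i) (y i)) = FF a (sum x A) (sum y A)"
proof -
  define X where "X = sum x A"
  define Y where "Y = sum y A"
  have X0: "X \<ge> 0" "Y \<ge> 0" unfolding X_def Y_def using nn by (auto intro: sum_nonneg)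
  have "(\<Sum>i\<in>A. FF a (x i) (y i)) = FF a X Y"
  proof (cases "X = 0 \<or> Y = 0")
    case True
    then show ?thesis
    proof
      assume "X = 0"
      then have "\<forall>i\<in>A. x i = 0" using fin nn unfolding X_def by (simp add: sum_nonneg_eq_0_iff)
      then show ?thesis using a \<open>X = 0\<close> by (simp add: FF_zero_left)
    next
      assume "Y = 0"
      then have "\<forall>i\<in>A. y i = 0" using fin nn unfolding Y_def by (simp add: sum_nonneg_eq_0_iff)
      then show ?thesis using a \<open>Y = 0\<close> by (simp add: FF_zero_right)
    qed
  next
    case False
    then have Xp: "X > 0" "Y > 0" using X0 by auto
    have "FF a (x i) (y i) = y i * FF a (X / Y) 1" if "i \<in> A" for i
    proof -
      have "x i = y i * (X / Y)" using pr that Xp unfolding X_def Y_def by (simp add: field_simps)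
      then have "FF a (x i) (y i) = FF a (y i * (X / Y)) (y i * 1)" by simp
      also have "\<dots> = y i * FF a (X / Y) 1" using FF_hom[of "y i" "X / Y" 1 a] nn that Xp by simp
      finally show ?thesis .
    qed
    then have "(\<Sum>i\<in>A. FF a (x i) (y i)) = Y * FF a (X / Y) 1"
      unfolding Y_def by (simp add: sum_distrib_right)
    also have "\<dots> = FF a (Y * (X / Y)) (Y * 1)" using FF_hom[of Y "X / Y" 1 a] Xp by simp
    also have "\<dots> = FF a X Y" using Xp by simp
    finally show ?thesis .
  qed
  then show ?thesis unfolding X_def Y_def .
qed

definition is_diag :: "'b set \<Rightarrow> ('b \<Rightarrow> real) \<Rightarrow> ('b \<Rightarrow> 'b \<Rightarrow> complex) \<Rightarrow> bool" where
  "is_diag I p X \<longleftrightarrow> (\<forall>i\<in>I. \<forall>j\<in>I. X i j = (if i = j then complex_of_real (p i) else 0))"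

lemma tr_diag:
  assumes "is_diag I p X" "finite I"
  shows "tr_mult I X T = (\<Sum>i\<in>I. complex_of_real (p i) * T i i)"
  unfolding tr_mult_def
proof (rule sum.cong[OF refl])
  fix i assume i: "i \<in> I"
  have "(\<Sum>j\<in>I. X i j * T j i) = (\<Sum>j\<in>I. if i = j then complex_of_real (p i) * T j i else 0)"
    using assms(1) i unfolding is_diag_def by (intro sum.cong) auto
  also have "\<dots> = complex_of_real (p i) * T i i" using assms(2) i by simp
  finally show "(\<Sum>j\<in>I. X i j * T j i) = complex_of_real (p i) * T i i" .
qed

lemma test_meas_diag:
  assumes "is_diag I p X" "finite I"
  shows "test_meas I T X True = (\<Sum>i\<in>I. p i * Re (T i i))"
    and "test_meas I T X False = (\<Sum>i\<in>I. p i * (1 - Re (T i i)))"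
  using tr_diag[OF assms, of T] tr_diag[OF assms, of "\<lambda>i j. id_op i j - T i j"]
  by (simp_all add: test_meas_def Re_sum id_op_def)

lemma quad_form_unit:
  assumes "finite I" "i \<in> I"
  shows "quad_form I X (\<lambda>j. if j = i then 1 else 0) = X i i"
proof -
  have "quad_form I X (\<lambda>j. if j = i then 1 else 0) =
        (\<Sum>a\<in>I. if a = i then (\<Sum>b\<in>I. if b = i then X a b else 0) else 0)"
    unfolding quad_form_def by (intro sum.cong) (auto intro: sum.cong)
  also have "\<dots> = X i i" using assms by simp
  finally show ?thesis .
qed

lemma test_diag_entries:
  assumes "is_test I T" "finite I" "i \<in> I"
  shows "0 \<le> Re (T i i)" "Re (T i i) \<le> 1"
proof -
  have "0 \<le> Re (quad_form I T (\<lambda>j. if j = i then 1 else 0))"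
    using assms(1) unfolding is_test_def psd_op_def by blast
  then show "0 \<le> Re (T i i)" using quad_form_unit[OF assms(2,3)] by simp
  have "0 \<le> Re (quad_form I (\<lambda>i j. id_op i j - T i j) (\<lambda>j. if j = i then 1 else 0))"
    using assms(1) unfolding is_test_def psd_op_def by blast
  then show "Re (T i i) \<le> 1" using quad_form_unit[OF assms(2,3)] by (simp add: id_op_def)
qed

lemma psd_diag:
  assumes "finite I" "\<forall>i\<in>I. 0 \<le> q i"
  shows "psd_op I (diag_op q)"
proof -
  have qf: "quad_form I (diag_op q) v = complex_of_real (\<Sum>i\<in>I. q i * (cmod (v i))\<^sup>2)" for v
  proof -
    have "quad_form I (diag_op q) v = (\<Sum>i\<in>I. cnj (v i) * complex_of_real (q i) * v i)"
      unfolding quad_form_def diag_op_def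
    proof (rule sum.cong[OF refl])
      fix i assume i: "i \<in> I"
      have "(\<Sum>j\<in>I. cnj (v i) * (if i = j then complex_of_real (q i) else 0) * v j) =
            (\<Sum>j\<in>I. if i = j then cnj (v i) * complex_of_real (q i) * v j else 0)"
        by (intro sum.cong) auto
      also have "\<dots> = cnj (v i) * complex_of_real (q i) * v i" using assms(1) i by simp
      finally show "(\<Sum>j\<in>I. cnj (v i) * (if i = j then complex_of_real (q i) else 0) * v j) =
            cnj (v i) * complex_of_real (q i) * v i" .
    qed
    also have "\<dots> = (\<Sum>i\<in>I. complex_of_real (q i * (cmod (v i))\<^sup>2))"
    proof (rule sum.cong[OF refl])
      fix i
      have "cnj (v i) * complex_of_real (q i) * v i = complex_of_real (q i) * (cnj (v i) * v i)"
        by (simp add: algebra_simps)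
      also have "\<dots> = complex_of_real (q i * (cmod (v i))\<^sup>2)"
      proof -
        have "cnj (v i) * v i = complex_of_real ((cmod (v i))\<^sup>2)"
          using complex_norm_square[of "v i"] by (simp add: mult.commute)
        then show ?thesis by simp
      qed
      finally show "cnj (v i) * complex_of_real (q i) * v i = complex_of_real (q i * (cmod (v i))\<^sup>2)" .
    qed
    also have "\<dots> = complex_of_real (\<Sum>i\<in>I. q i * (cmod (v i))\<^sup>2)" by simp
    finally show ?thesis .
  qed
  show ?thesis unfolding psd_op_def qf using assms(2) by (auto intro: sum_nonneg)
qed

lemma diag_is_test:
  assumes "finite I" "\<forall>i\<in>I. 0 \<le> t i \<and> t i \<le> 1"
  shows "is_test I (diag_op t)"
proof -
  have "(\<lambda>i j. id_op i j - diag_op t i j) = diag_op (\<lambda>i. 1 - t i)"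
    by (auto simp: id_op_def diag_op_def fun_eq_iff)
  then show ?thesis unfolding is_test_def using psd_diag assms by auto
qed

definition Gt :: "real \<Rightarrow> 'b set \<Rightarrow> ('b \<Rightarrow> real) \<Rightarrow> ('b \<Rightarrow> real) \<Rightarrow> ('b \<Rightarrow> real) \<Rightarrow> real" where
  "Gt a I p q t = FF a (\<Sum>i\<in>I. p i * t i) (\<Sum>i\<in>I. q i * t i)
                + FF a (\<Sum>i\<in>I. p i * (1 - t i)) (\<Sum>i\<in>I. q i * (1 - t i))"

definition hh :: "real \<Rightarrow> real \<Rightarrow> ereal" where
  "hh a s = (if s = 0 then \<infinity> else ereal (ln s / (a - 1)))"

lemma renyi_hh: "renyi_div A a p q = hh a (\<Sum>x\<in>A. FF a (p x) (q x))"
  by (simp add: renyi_div_def hh_def FF_def Let_def)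

lemma renyi_test:
  assumes "is_diag I p X" "is_diag I q Y" "finite I"
  shows "renyi_div UNIV a (test_meas I T X) (test_meas I T Y) = hh a (Gt a I p q (\<lambda>i. Re (T i i)))"
  unfolding renyi_hh Gt_def using test_meas_diag[OF assms(1,3)] test_meas_diag[OF assms(2,3)]
  by (simp add: UNIV_bool add.commute)

lemma hh_anti:
  assumes "0 \<le> s1" "s1 \<le> s2" "a < 1"
  shows "hh a s2 \<le> hh a s1"
proof (cases "s1 = 0")
  case True then show ?thesis by (simp add: hh_def)
next
  case False
  then have "s1 > 0" "s2 > 0" using assms by auto
  then have "ln s1 \<le> ln s2" using assms by simp
  then have "ln s2 / (a - 1) \<le> ln s1 / (a - 1)" using assms by (simp add: divide_right_mono_neg)
  then show ?thesis using \<open>s1 > 0\<close> \<open>s2 > 0\<close> by (simp add: hh_def)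
qed

lemma hh_inj:
  assumes "0 \<le> s1" "0 \<le> s2" "a < 1" "hh a s1 = hh a s2"
  shows "s1 = s2"
proof (cases "s1 = 0 \<or> s2 = 0")
  case True then show ?thesis using assms by (auto simp: hh_def split: if_splits)
next
  case False
  then have p: "s1 > 0" "s2 > 0" using assms by auto
  then have "ln s1 / (a - 1) = ln s2 / (a - 1)" using assms by (simp add: hh_def)
  then have "ln s1 = ln s2" using assms by (simp add: divide_cancel_right)
  then show ?thesis using p by simp
qed

lemma FF_concave:
  assumes u: "0 \<le> u" "u \<le> 1" and nn: "0 \<le> x1" "0 \<le> y1" "0 \<le> x2" "0 \<le> y2" and a: "0 < a" "a < 1"
  shows "(1 - u) * FF a x1 y1 + u * FF a x2 y2 \<le> FF a ((1 - u) * x1 + u * x2) ((1 - u) * y1 + u * y2)"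
proof -
  define x where "x = (\<lambda>b::bool. if b then (1 - u) * x1 else u * x2)"
  define y where "y = (\<lambda>b::bool. if b then (1 - u) * y1 else u * y2)"
  have "(\<Sum>b\<in>UNIV. FF a (x b) (y b)) \<le> FF a (sum x UNIV) (sum y UNIV)"
    by (rule holder_gen(1)) (use u nn a in \<open>auto simp: x_def y_def\<close>)
  moreover have "(\<Sum>b\<in>UNIV. FF a (x b) (y b)) = FF a ((1 - u) * x1) ((1 - u) * y1) + FF a (u * x2) (u * y2)"
    by (simp add: UNIV_bool x_def y_def add.commute)
  moreover have "FF a ((1 - u) * x1) ((1 - u) * y1) = (1 - u) * FF a x1 y1" using FF_hom u nn by simp
  moreover have "FF a (u * x2) (u * y2) = u * FF a x2 y2" using FF_hom u nn by simp
  moreover have "sum x UNIV = (1 - u) * x1 + u * x2" "sum y UNIV = (1 - u) * y1 + u * y2"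
    by (simp_all add: UNIV_bool x_def y_def add.commute)
  ultimately show ?thesis by simp
qed

lemma dp:
  assumes fin: "finite I" and nn: "\<forall>i\<in>I. 0 \<le> p i \<and> 0 \<le> q i" and t: "\<forall>i\<in>I. 0 \<le> t i \<and> t i \<le> 1"
    and a: "0 < a" "a < 1"
  shows "(\<Sum>i\<in>I. FF a (p i) (q i)) \<le> Gt a I p q t"
proof -
  have split: "FF a (p i) (q i) = FF a (p i * t i) (q i * t i) + FF a (p i * (1 - t i)) (q i * (1 - t i))"
    if "i \<in> I" for i
  proof -
    have "FF a (p i * t i) (q i * t i) = t i * FF a (p i) (q i)"
      using FF_hom[of "t i" "p i" "q i" a] nn t that by (simp add: mult.commute)
    moreover have "FF a (p i * (1 - t i)) (q i * (1 - t i)) = (1 - t i) * FF a (p i) (q i)"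
      using FF_hom[of "1 - t i" "p i" "q i" a] nn t that by (simp add: mult.commute)
    ultimately show ?thesis by (simp add: algebra_simps)
  qed
  have "(\<Sum>i\<in>I. FF a (p i) (q i)) = (\<Sum>i\<in>I. FF a (p i * t i) (q i * t i)) +
          (\<Sum>i\<in>I. FF a (p i * (1 - t i)) (q i * (1 - t i)))"
    by (simp add: split sum.distrib)
  also have "\<dots> \<le> Gt a I p q t"
    unfolding Gt_def
    by (intro add_mono holder_gen(1)[OF fin]) (use nn t a in auto)
  finally show ?thesis .
qed

lemma Gt_cong: "\<forall>i\<in>I. t i = t' i \<Longrightarrow> Gt a I p q t = Gt a I p q t'"
  unfolding Gt_def by (metis (no_types, lifting) sum.cong)

lemma lin_split:
  fixes f t :: "'b \<Rightarrow> real"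
  assumes fin: "finite I" and k: "k \<in> I"
  shows "(\<Sum>i\<in>I. f i * (c + d * t i)) =
         (1 - t k) * (\<Sum>i\<in>I. f i * (c + d * (t(k:=0)) i)) + t k * (\<Sum>i\<in>I. f i * (c + d * (t(k:=1)) i))"
proof -
  define R where "R = (\<Sum>i\<in>I - {k}. f i * (c + d * t i))"
  have R0: "(\<Sum>i\<in>I - {k}. f i * (c + d * (t(k:=0)) i)) = R"
    unfolding R_def by (intro sum.cong) auto
  have R1: "(\<Sum>i\<in>I - {k}. f i * (c + d * (t(k:=1)) i)) = R"
    unfolding R_def by (intro sum.cong) auto
  have "(\<Sum>i\<in>I. f i * (c + d * t i)) = f k * (c + d * t k) + R"
    unfolding R_def using sum.remove[OF fin k] by blast
  moreover have "(\<Sum>i\<in>I. f i * (c + d * (t(k:=0)) i)) = f k * c + R"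
    using sum.remove[OF fin k, of "\<lambda>i. f i * (c + d * (t(k:=0)) i)"] R0 by simp
  moreover have "(\<Sum>i\<in>I. f i * (c + d * (t(k:=1)) i)) = f k * (c + d) + R"
    using sum.remove[OF fin k, of "\<lambda>i. f i * (c + d * (t(k:=1)) i)"] R1 by simp
  ultimately show ?thesis by (simp add: algebra_simps)
qed

lemma Gt_concave_coord:
  fixes p q t :: "'b \<Rightarrow> real"
  assumes fin: "finite I" and k: "k \<in> I" and nn: "\<forall>i\<in>I. 0 \<le> p i \<and> 0 \<le> q i"
    and t: "\<forall>i\<in>I. 0 \<le> t i \<and> t i \<le> 1" and a: "0 < a" "a < 1"
  shows "(1 - t k) * Gt a I p q (t(k:=0)) + t k * Gt a I p q (t(k:=1)) \<le> Gt a I p q t"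
proof -
  let ?t0 = "t(k:=0)" and ?t1 = "t(k:=1)"
  have t0: "\<forall>i\<in>I. 0 \<le> ?t0 i \<and> ?t0 i \<le> 1" and t1: "\<forall>i\<in>I. 0 \<le> ?t1 i \<and> ?t1 i \<le> 1" using t by auto
  have uk: "0 \<le> t k" "t k \<le> 1" using t k by auto
  have L1: "(\<Sum>i\<in>I. f i * t i) = (1 - t k) * (\<Sum>i\<in>I. f i * ?t0 i) + t k * (\<Sum>i\<in>I. f i * ?t1 i)" for f
    using lin_split[OF fin k, of f 0 1 t] by simp
  have L2: "(\<Sum>i\<in>I. f i * (1 - t i)) = (1 - t k) * (\<Sum>i\<in>I. f i * (1 - ?t0 i)) + t k * (\<Sum>i\<in>I. f i * (1 - ?t1 i))" for f
    using lin_split[OF fin k, of f 1 "-1" t] by simp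
  have nnp: "0 \<le> (\<Sum>i\<in>I. f i * s i)" if "\<forall>i\<in>I. 0 \<le> f i" "\<forall>i\<in>I. 0 \<le> s i" for f s :: "'b \<Rightarrow> real"
    using that by (auto intro!: sum_nonneg)
  have "(1 - t k) * Gt a I p q ?t0 + t k * Gt a I p q ?t1 =
     ((1 - t k) * FF a (\<Sum>i\<in>I. p i * ?t0 i) (\<Sum>i\<in>I. q i * ?t0 i) + t k * FF a (\<Sum>i\<in>I. p i * ?t1 i) (\<Sum>i\<in>I. q i * ?t1 i))
   + ((1 - t k) * FF a (\<Sum>i\<in>I. p i * (1 - ?t0 i)) (\<Sum>i\<in>I. q i * (1 - ?t0 i)) + t k * FF a (\<Sum>i\<in>I. p i * (1 - ?t1 i)) (\<Sum>i\<in>I. q i * (1 - ?t1 i)))"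
    unfolding Gt_def by (simp add: algebra_simps)
  also have "\<dots> \<le> Gt a I p q t"
    unfolding Gt_def L1[of p] L1[of q] L2[of p] L2[of q]
    apply (intro add_mono FF_concave[OF uk] a)
    using nn t0 t1 by (auto intro!: nnp)
  finally show ?thesis .
qed

lemma vertex:
  fixes p q t :: "'b \<Rightarrow> real"
  assumes fin: "finite I" and nn: "\<forall>i\<in>I. 0 \<le> p i \<and> 0 \<le> q i" and a: "0 < a" "a < 1"
    and t: "\<forall>i\<in>I. 0 \<le> t i \<and> t i \<le> 1"
  shows "\<exists>S\<subseteq>I. Gt a I p q (\<lambda>i. if i \<in> S then 1 else 0) \<le> Gt a I p q t"
proof -
  have "\<forall>t::'b \<Rightarrow> real. (\<forall>i\<in>I. 0 \<le> t i \<and> t i \<le> 1) \<and> (\<forall>i\<in>I - K. t i = 0 \<or> t i = 1) \<longrightarrow>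
          (\<exists>S\<subseteq>I. Gt a I p q (\<lambda>i. if i \<in> S then 1 else 0) \<le> Gt a I p q t)" if "finite K" for K
    using that
  proof (induction K rule: finite_induct)
    case empty
    show ?case
    proof (intro allI impI)
      fix t :: "'b \<Rightarrow> real" assume h: "(\<forall>i\<in>I. 0 \<le> t i \<and> t i \<le> 1) \<and> (\<forall>i\<in>I - {}. t i = 0 \<or> t i = 1)"
      let ?S = "{i\<in>I. t i = 1}"
      have "Gt a I p q (\<lambda>i. if i \<in> ?S then 1 else 0) = Gt a I p q t"
        by (rule Gt_cong) (use h in auto)
      then show "\<exists>S\<subseteq>I. Gt a I p q (\<lambda>i. if i \<in> S then 1 else 0) \<le> Gt a I p q t"
        by (intro exI[of _ ?S]) auto
    qed
  next
    case (insert k K)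
    show ?case
    proof (intro allI impI)
      fix t :: "'b \<Rightarrow> real" assume h: "(\<forall>i\<in>I. 0 \<le> t i \<and> t i \<le> 1) \<and> (\<forall>i\<in>I - insert k K. t i = 0 \<or> t i = 1)"
      show "\<exists>S\<subseteq>I. Gt a I p q (\<lambda>i. if i \<in> S then 1 else 0) \<le> Gt a I p q t"
      proof (cases "k \<in> I")
        case False
        then have "I - insert k K = I - K" by auto
        then show ?thesis using insert.IH h by auto
      next
        case True
        let ?t0 = "t(k:=0)" and ?t1 = "t(k:=1)"
        have h0: "(\<forall>i\<in>I. 0 \<le> ?t0 i \<and> ?t0 i \<le> 1) \<and> (\<forall>i\<in>I - K. ?t0 i = 0 \<or> ?t0 i = 1)"
          using h by auto
        have h1: "(\<forall>i\<in>I. 0 \<le> ?t1 i \<and> ?t1 i \<le> 1) \<and> (\<forall>i\<in>I - K. ?t1 i = 0 \<or> ?t1 i = 1)"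
          using h by auto
        have c: "(1 - t k) * Gt a I p q ?t0 + t k * Gt a I p q ?t1 \<le> Gt a I p q t"
          using Gt_concave_coord[OF fin True nn _ a] h by blast
        have uk: "0 \<le> t k" "t k \<le> 1" using h True by auto
        show ?thesis
        proof (cases "Gt a I p q ?t0 \<le> Gt a I p q ?t1")
          case True
          then have "t k * Gt a I p q ?t0 \<le> t k * Gt a I p q ?t1" using uk(1) by (rule mult_left_mono)
          moreover have "(1 - t k) * Gt a I p q ?t0 + t k * Gt a I p q ?t0 = Gt a I p q ?t0"
            by (simp add: algebra_simps)
          ultimately have "Gt a I p q ?t0 \<le> Gt a I p q t"
            using c by linarith
          moreover obtain S where "S \<subseteq> I" "Gt a I p q (\<lambda>i. if i \<in> S then 1 else 0) \<le> Gt a I p q ?t0"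
            using insert.IH[rule_format, OF h0] by blast
          ultimately show ?thesis by (meson order_trans)
        next
          case False
          then have "Gt a I p q ?t1 \<le> Gt a I p q ?t0" by simp
          then have "(1 - t k) * Gt a I p q ?t1 \<le> (1 - t k) * Gt a I p q ?t0" using uk(2) by (intro mult_left_mono) simp_all
          moreover have "(1 - t k) * Gt a I p q ?t1 + t k * Gt a I p q ?t1 = Gt a I p q ?t1"
            by (simp add: algebra_simps)
          ultimately have "Gt a I p q ?t1 \<le> Gt a I p q t"
            using c by linarith
          moreover obtain S where "S \<subseteq> I" "Gt a I p q (\<lambda>i. if i \<in> S then 1 else 0) \<le> Gt a I p q ?t1"
            using insert.IH[rule_format, OF h1] by blast
          ultimately show ?thesis by (meson order_trans)
        qed
      qed
    qed
  qed
  from this[OF fin] t show ?thesis by auto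
qed

lemma Gt_ind:
  fixes I S :: "'b set" and p q :: "'b \<Rightarrow> real"
  assumes fin: "finite I" and S: "S \<subseteq> I"
  shows "Gt a I p q (\<lambda>i. if i \<in> S then 1 else 0) =
         FF a (sum p S) (sum q S) + FF a (sum p (I - S)) (sum q (I - S))"
proof -
  have e1: "(\<Sum>i\<in>I. f i * (if i \<in> S then 1 else 0)) = sum f S" for f :: "'b \<Rightarrow> real"
  proof -
    have "(\<Sum>i\<in>I. f i * (if i \<in> S then 1 else 0)) = (\<Sum>i\<in>I. if i \<in> S then f i else 0)"
      by (intro sum.cong) auto
    also have "\<dots> = sum f (I \<inter> S)" using fin by (simp add: sum.inter_restrict)
    also have "I \<inter> S = S" using S by auto
    finally show ?thesis .
  qed
  have e2: "(\<Sum>i\<in>I. f i * (1 - (if i \<in> S then 1 else 0))) = sum f (I - S)" for f :: "'b \<Rightarrow> real"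
  proof -
    have "(\<Sum>i\<in>I. f i * (1 - (if i \<in> S then 1 else 0))) = sum f I - (\<Sum>i\<in>I. f i * (if i \<in> S then 1 else 0))"
      by (simp add: algebra_simps sum_subtractf)
    also have "\<dots> = sum f I - sum f S" using e1 by simp
    also have "\<dots> = sum f (I - S)" using fin S by (simp add: sum_diff finite_subset)
    finally show ?thesis .
  qed
  show ?thesis unfolding Gt_def e1 e2 ..
qed

lemma Gt_nonneg: "0 \<le> Gt a I p q t"
  unfolding Gt_def by (simp add: FF_nonneg add_nonneg_nonneg)

lemma sumFF_nonneg: "0 \<le> (\<Sum>i\<in>A. FF a (p i) (q i))"
  by (simp add: FF_nonneg sum_nonneg)

locale diag_setup =
  fixes I :: "'b set" and p q :: "'b \<Rightarrow> real" and X Y :: "'b \<Rightarrow> 'b \<Rightarrow> complex" and a :: real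
  assumes fin: "finite I" and dX: "is_diag I p X" and dY: "is_diag I q Y"
    and nn: "\<forall>i\<in>I. 0 \<le> p i \<and> 0 \<le> q i" and a: "0 < a" "a < 1"
begin

lemma renyi_test': "is_test I T \<Longrightarrow> renyi_div UNIV a (test_meas I T X) (test_meas I T Y) = hh a (Gt a I p q (\<lambda>i. Re (T i i)))"
  using renyi_test[OF dX dY fin] by blast

lemma D_test_le: "D_test I a X Y \<le> renyi_div I a p q"
  unfolding D_test_def
proof (rule SUP_least)
  fix T assume "T \<in> {T. is_test I T}"
  then have T: "is_test I T" by simp
  have t: "\<forall>i\<in>I. 0 \<le> Re (T i i) \<and> Re (T i i) \<le> 1" using test_diag_entries[OF T fin] by blast
  show "renyi_div UNIV a (test_meas I T X) (test_meas I T Y) \<le> renyi_div I a p q"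
    using hh_anti[OF sumFF_nonneg dp[OF fin nn t a] a(2)]
    by (simp only: renyi_test'[OF T] renyi_hh[of I a p q])
qed

lemma diag_test_val:
  assumes "\<forall>i\<in>I. 0 \<le> t i \<and> t i \<le> 1"
  shows "renyi_div UNIV a (test_meas I (diag_op t) X) (test_meas I (diag_op t) Y) = hh a (Gt a I p q t)"
  using renyi_test'[OF diag_is_test[OF fin assms]] by (simp add: diag_op_def)

lemma D_test_vertex: "D_test I a X Y = (SUP S\<in>Pow I. hh a (Gt a I p q (\<lambda>i. if i \<in> S then 1 else 0)))"
  unfolding D_test_def
proof (rule antisym)
  show "(SUP T\<in>{T. is_test I T}. renyi_div UNIV a (test_meas I T X) (test_meas I T Y))
        \<le> (SUP S\<in>Pow I. hh a (Gt a I p q (\<lambda>i. if i \<in> S then 1 else 0)))"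
  proof (rule SUP_mono)
    fix T assume "T \<in> {T. is_test I T}"
    then have T: "is_test I T" by simp
    have t: "\<forall>i\<in>I. 0 \<le> Re (T i i) \<and> Re (T i i) \<le> 1" using test_diag_entries[OF T fin] by blast
    obtain S where S: "S \<subseteq> I" "Gt a I p q (\<lambda>i. if i \<in> S then 1 else 0) \<le> Gt a I p q (\<lambda>i. Re (T i i))"
      using vertex[OF fin nn a t] by blast
    show "\<exists>S\<in>Pow I. renyi_div UNIV a (test_meas I T X) (test_meas I T Y)
            \<le> hh a (Gt a I p q (\<lambda>i. if i \<in> S then 1 else 0))"
      using S hh_anti[OF Gt_nonneg S(2) a(2)] renyi_test'[OF T] by auto
  qed
next
  show "(SUP S\<in>Pow I. hh a (Gt a I p q (\<lambda>i. if i \<in> S then 1 else 0)))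
        \<le> (SUP T\<in>{T. is_test I T}. renyi_div UNIV a (test_meas I T X) (test_meas I T Y))"
  proof (rule SUP_mono)
    fix S assume "S \<in> Pow I"
    let ?t = "\<lambda>i. if i \<in> S then 1 else (0::real)"
    have t: "\<forall>i\<in>I. 0 \<le> ?t i \<and> ?t i \<le> 1" by auto
    show "\<exists>T\<in>{T. is_test I T}. hh a (Gt a I p q ?t) \<le> renyi_div UNIV a (test_meas I T X) (test_meas I T Y)"
      using diag_test_val[OF t] diag_is_test[OF fin t] by (intro bexI[of _ "diag_op ?t"]) auto
  qed
qed

lemma D_test_attained: "\<exists>S\<subseteq>I. D_test I a X Y = hh a (Gt a I p q (\<lambda>i. if i \<in> S then 1 else 0))"
proof -
  let ?f = "\<lambda>S. hh a (Gt a I p q (\<lambda>i. if i \<in> S then 1 else 0))"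
  have "finite (?f ` Pow I)" "?f ` Pow I \<noteq> {}" using fin by auto
  then have "Sup (?f ` Pow I) \<in> ?f ` Pow I" using cSup_eq_Max Max_in by metis
  then show ?thesis unfolding D_test_vertex by auto
qed

lemma D_test_ge_vertex: "S \<subseteq> I \<Longrightarrow> hh a (Gt a I p q (\<lambda>i. if i \<in> S then 1 else 0)) \<le> D_test I a X Y"
  unfolding D_test_vertex by (rule SUP_upper) auto

lemma part_sum:
  assumes S: "S \<subseteq> I"
    and h0: "\<forall>i\<in>S. sum q S * p i = sum p S * q i"
    and h1: "\<forall>i\<in>I - S. sum q (I - S) * p i = sum p (I - S) * q i"
  shows "(\<Sum>i\<in>I. FF a (p i) (q i)) = Gt a I p q (\<lambda>i. if i \<in> S then 1 else 0)"
proof -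
  have fS: "finite S" using fin S finite_subset by blast
  have fS': "finite (I - S)" using fin by simp
  have "(\<Sum>i\<in>I. FF a (p i) (q i)) = (\<Sum>i\<in>I - S. FF a (p i) (q i)) + (\<Sum>i\<in>S. FF a (p i) (q i))"
    using sum.subset_diff[OF S fin] by blast
  also have "(\<Sum>i\<in>S. FF a (p i) (q i)) = FF a (sum p S) (sum q S)"
    by (rule holder_prop[OF fS _ _ a h0]) (use nn S in auto)
  also have "(\<Sum>i\<in>I - S. FF a (p i) (q i)) = FF a (sum p (I - S)) (sum q (I - S))"
    by (rule holder_prop[OF fS' _ _ a h1]) (use nn S in auto)
  finally show ?thesis using Gt_ind[OF fin S] by simp
qed

lemma eq_iff_partition:
  "D_test I a X Y = renyi_div I a p q \<longleftrightarrow>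
    (\<exists>S\<subseteq>I. (\<forall>i\<in>S. sum q S * p i = sum p S * q i) \<and> (\<forall>i\<in>I - S. sum q (I - S) * p i = sum p (I - S) * q i))"
proof
  assume eq: "D_test I a X Y = renyi_div I a p q"
  obtain S where S: "S \<subseteq> I" "D_test I a X Y = hh a (Gt a I p q (\<lambda>i. if i \<in> S then 1 else 0))"
    using D_test_attained by blast
  have fS: "finite S" using fin S finite_subset by blast
  have fS': "finite (I - S)" using fin by simp
  have "Gt a I p q (\<lambda>i. if i \<in> S then 1 else 0) = (\<Sum>i\<in>I. FF a (p i) (q i))"
    by (rule hh_inj[OF Gt_nonneg sumFF_nonneg a(2)]) (use eq S in \<open>simp add: renyi_hh\<close>)
  then have E: "FF a (sum p S) (sum q S) + FF a (sum p (I - S)) (sum q (I - S)) =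
     (\<Sum>i\<in>I - S. FF a (p i) (q i)) + (\<Sum>i\<in>S. FF a (p i) (q i))"
    using Gt_ind[OF fin S(1)] sum.subset_diff[OF S(1) fin] by simp
  have L1: "(\<Sum>i\<in>S. FF a (p i) (q i)) \<le> FF a (sum p S) (sum q S)"
    by (rule holder_gen(1)[OF fS]) (use nn S a in auto)
  have L2: "(\<Sum>i\<in>I - S. FF a (p i) (q i)) \<le> FF a (sum p (I - S)) (sum q (I - S))"
    by (rule holder_gen(1)[OF fS']) (use nn S a in auto)
  have E1: "(\<Sum>i\<in>S. FF a (p i) (q i)) = FF a (sum p S) (sum q S)" using E L1 L2 by linarith
  have E2: "(\<Sum>i\<in>I - S. FF a (p i) (q i)) = FF a (sum p (I - S)) (sum q (I - S))" using E L1 L2 by linarith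
  have "\<forall>i\<in>S. sum q S * p i = sum p S * q i"
    by (rule holder_gen(2)[OF fS _ _ a E1]) (use nn S in auto)
  moreover have "\<forall>i\<in>I - S. sum q (I - S) * p i = sum p (I - S) * q i"
    by (rule holder_gen(2)[OF fS' _ _ a E2]) (use nn S in auto)
  ultimately show "\<exists>S\<subseteq>I. (\<forall>i\<in>S. sum q S * p i = sum p S * q i) \<and> (\<forall>i\<in>I - S. sum q (I - S) * p i = sum p (I - S) * q i)"
    using S by blast
next
  assume "\<exists>S\<subseteq>I. (\<forall>i\<in>S. sum q S * p i = sum p S * q i) \<and> (\<forall>i\<in>I - S. sum q (I - S) * p i = sum p (I - S) * q i)"
  then obtain S where S: "S \<subseteq> I" "\<forall>i\<in>S. sum q S * p i = sum p S * q i"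
    "\<forall>i\<in>I - S. sum q (I - S) * p i = sum p (I - S) * q i" by blast
  have "renyi_div I a p q = hh a (Gt a I p q (\<lambda>i. if i \<in> S then 1 else 0))"
    unfolding renyi_hh using part_sum[OF S] by simp
  then have "renyi_div I a p q \<le> D_test I a X Y" using D_test_ge_vertex[OF S(1)] by simp
  then show "D_test I a X Y = renyi_div I a p q" using D_test_le by (rule antisym[rotated])
qed

end

lemma words_finite: "finite (words n :: ('c::finite) list set)"
proof -
  have "words n = {xs :: 'c list. set xs \<subseteq> UNIV \<and> length xs = n}" by (simp add: words_def)
  then show ?thesis using finite_lists_length_eq[of "UNIV :: 'c set" n] by simp
qed

lemma tensor_diag:
  fixes p :: "'c \<Rightarrow> real"
  shows "is_diag (words n) (\<lambda>xs. \<Prod>k<n. p (xs ! k)) (tensor_pow n (diag_op p))"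
  unfolding is_diag_def
proof (intro ballI)
  fix xs ys :: "'c list" assume xs: "xs \<in> words n" and ys: "ys \<in> words n"
  show "tensor_pow n (diag_op p) xs ys = (if xs = ys then complex_of_real (\<Prod>k<n. p (xs ! k)) else 0)"
  proof (cases "xs = ys")
    case True
    then show ?thesis by (simp add: tensor_pow_def diag_op_def)
  next
    case False
    then obtain k where "k < n" "xs ! k \<noteq> ys ! k" using xs ys unfolding words_def
      by (auto simp: list_eq_iff_nth_eq)
    then have "(\<Prod>k<n. diag_op p (xs ! k) (ys ! k)) = 0"
      by (intro prod_zero) (auto simp: diag_op_def)
    then show ?thesis using False by (simp add: tensor_pow_def)
  qed
qed

lemma words_Suc: "words (Suc n) = (\<lambda>(x, xs). x # xs) ` (UNIV \<times> words n)"
  by (auto simp: words_def length_Suc_conv)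

lemma sum_words_prod:
  fixes f :: "'c::finite \<Rightarrow> real"
  shows "(\<Sum>xs\<in>words n. \<Prod>k<n. f (xs ! k)) = (\<Sum>x\<in>UNIV. f x) ^ n"
proof (induction n)
  case 0
  have w: "words 0 = {[]}" by (auto simp: words_def)
  show ?case unfolding w by simp
next
  case (Suc n)
  have inj: "inj_on (\<lambda>(x, xs). x # xs) (UNIV \<times> words n)" by (auto simp: inj_on_def)
  have "(\<Sum>xs\<in>words (Suc n). \<Prod>k<Suc n. f (xs ! k)) =
        (\<Sum>(x, xs)\<in>UNIV \<times> words n. \<Prod>k<Suc n. f ((x # xs) ! k))"
    unfolding words_Suc by (subst sum.reindex[OF inj]) (simp add: case_prod_unfold)
  also have "\<dots> = (\<Sum>(x, xs)\<in>UNIV \<times> words n. f x * (\<Prod>k<n. f (xs ! k)))"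
    by (intro sum.cong refl) (auto simp del: prod.lessThan_Suc simp add: prod.lessThan_Suc_shift)
  also have "\<dots> = (\<Sum>x\<in>UNIV. \<Sum>xs\<in>words n. f x * (\<Prod>k<n. f (xs ! k)))"
    by (simp only: sum.cartesian_product)
  also have "\<dots> = (\<Sum>x\<in>UNIV. f x * (\<Sum>xs\<in>words n. \<Prod>k<n. f (xs ! k)))"
    by (simp add: sum_distrib_left)
  also have "\<dots> = (\<Sum>x\<in>UNIV. f x) * (\<Sum>xs\<in>words n. \<Prod>k<n. f (xs ! k))"
    by (simp add: sum_distrib_right)
  finally show ?case using Suc by simp
qed

lemma hh_pow:
  assumes "0 \<le> s" "1 \<le> n"
  shows "hh a (s ^ n) = ereal (real n) * hh a s"
proof (cases "s = 0")
  case True then show ?thesis using assms by (simp add: hh_def)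
next
  case False
  then have "s > 0" using assms by simp
  then show ?thesis using False by (simp add: hh_def ln_realpow)
qed

lemma renyi_words:
  fixes \<rho> \<sigma> :: "'c::finite \<Rightarrow> real"
  assumes "1 \<le> n" "\<forall>x. 0 \<le> \<rho> x" "\<forall>x. 0 \<le> \<sigma> x"
  shows "renyi_div (words n) a (\<lambda>xs. \<Prod>k<n. \<rho> (xs ! k)) (\<lambda>xs. \<Prod>k<n. \<sigma> (xs ! k))
         = ereal (real n) * renyi_div UNIV a \<rho> \<sigma>"
proof -
  have "(\<Sum>xs\<in>words n. FF a (\<Prod>k<n. \<rho> (xs ! k)) (\<Prod>k<n. \<sigma> (xs ! k)))
      = (\<Sum>xs\<in>words n. \<Prod>k<n. FF a (\<rho> (xs ! k)) (\<sigma> (xs ! k)))"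
    by (simp add: FF_def prod_powr_distrib prod.distrib)
  also have "\<dots> = (\<Sum>x\<in>UNIV. FF a (\<rho> x) (\<sigma> x)) ^ n" by (rule sum_words_prod)
  finally show ?thesis unfolding renyi_hh using hh_pow[OF sumFF_nonneg assms(1)] by simp
qed


lemma diag_op_is_diag: "is_diag I p (diag_op p)"
  by (simp add: is_diag_def diag_op_def)

lemma setup_UNIV:
  fixes \<rho> \<sigma> :: "'a::finite \<Rightarrow> real"
  assumes "\<forall>\<omega>. 0 \<le> \<rho> \<omega>" "\<forall>\<omega>. 0 \<le> \<sigma> \<omega>" "0 < a" "a < 1"
  shows "diag_setup UNIV \<rho> \<sigma> (diag_op \<rho>) (diag_op \<sigma>) a"
  using assms by unfold_locales (auto simp: diag_op_is_diag)

lemma setup_words: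
  fixes \<rho> \<sigma> :: "'a::finite \<Rightarrow> real"
  assumes "\<forall>\<omega>. 0 \<le> \<rho> \<omega>" "\<forall>\<omega>. 0 \<le> \<sigma> \<omega>" "0 < a" "a < 1"
  shows "diag_setup (words n) (\<lambda>xs. \<Prod>k<n. \<rho> (xs ! k)) (\<lambda>xs. \<Prod>k<n. \<sigma> (xs ! k))
           (tensor_pow n (diag_op \<rho>)) (tensor_pow n (diag_op \<sigma>)) a"
  using assms by unfold_locales (auto simp: tensor_diag words_finite intro!: prod_nonneg)

lemma main_eq:
  fixes \<rho> \<sigma> :: "'a::finite \<Rightarrow> real"
  assumes "\<forall>\<omega>. 0 \<le> \<rho> \<omega>" "\<forall>\<omega>. 0 \<le> \<sigma> \<omega>" "0 < a" "a < 1"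
  shows "D_test UNIV a (diag_op \<rho>) (diag_op \<sigma>) = renyi_div UNIV a \<rho> \<sigma> \<longleftrightarrow>
    (\<exists>\<Omega>0 \<Omega>1. \<Omega>1 = UNIV - \<Omega>0
                 \<and> (\<forall>\<omega>\<in>\<Omega>0. sum \<sigma> \<Omega>0 * \<rho> \<omega> = sum \<rho> \<Omega>0 * \<sigma> \<omega>)
                 \<and> (\<forall>\<omega>\<in>\<Omega>1. sum \<sigma> \<Omega>1 * \<rho> \<omega> = sum \<rho> \<Omega>1 * \<sigma> \<omega>))"
  using diag_setup.eq_iff_partition[OF setup_UNIV[OF assms]] by auto

lemma reg_eq:
  fixes \<rho> \<sigma> :: "'a::finite \<Rightarrow> real"
  assumes nn: "\<forall>\<omega>. 0 \<le> \<rho> \<omega>" "\<forall>\<omega>. 0 \<le> \<sigma> \<omega>" and a: "0 < a" "a < 1"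
    and h0: "\<forall>\<omega>\<in>\<Omega>0. sum \<sigma> \<Omega>0 * \<rho> \<omega> = sum \<rho> \<Omega>0 * \<sigma> \<omega>"
    and h1: "\<forall>\<omega>\<in>UNIV - \<Omega>0. sum \<sigma> (UNIV - \<Omega>0) * \<rho> \<omega> = sum \<rho> (UNIV - \<Omega>0) * \<sigma> \<omega>"
  shows "D_test_reg a (diag_op \<rho>) (diag_op \<sigma>) = renyi_div UNIV a \<rho> \<sigma>"
proof -
  let ?R = "renyi_div UNIV a \<rho> \<sigma>"
  let ?P = "\<lambda>n xs. \<Prod>k<n. \<rho> (xs ! k)" and ?Q = "\<lambda>n xs. \<Prod>k<n. \<sigma> (xs ! k)"
  let ?D = "\<lambda>n. D_test (words n) a (tensor_pow n (diag_op \<rho>)) (tensor_pow n (diag_op \<sigma>))"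
  have up: "ereal (1 / real n) * ?D n \<le> ?R" if n: "n \<in> {1..}" for n
  proof -
    have n1: "1 \<le> n" using n by simp
    have "?D n \<le> renyi_div (words n) a (?P n) (?Q n)"
      by (rule diag_setup.D_test_le[OF setup_words[OF nn a]])
    also have "\<dots> = ereal (real n) * ?R" by (rule renyi_words[OF n1 nn])
    finally have "ereal (1 / real n) * ?D n \<le> ereal (1 / real n) * (ereal (real n) * ?R)"
      by (rule ereal_mult_left_mono) simp
    also have "\<dots> = (ereal (1 / real n) * ereal (real n)) * ?R" by (rule mult.assoc[symmetric])
    also have "ereal (1 / real n) * ereal (real n) = 1" using n1 by simp
    finally show ?thesis by simp
  qed
  have low: "?R \<le> ?D 1"
  proof -
    let ?e = "\<lambda>x::'a. [x]"
    have inj: "inj ?e" by (auto simp: inj_on_def)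
    have w1: "words 1 = range ?e" by (auto simp: words_def length_Suc_conv)
    let ?S = "?e ` \<Omega>0"
    have S: "?S \<subseteq> words 1" using w1 by auto
    have cS: "words 1 - ?S = ?e ` (UNIV - \<Omega>0)" using w1 inj by auto
    have sm: "sum (?P 1) (?e ` A) = sum \<rho> A" "sum (?Q 1) (?e ` A) = sum \<sigma> A" for A
      using inj by (simp_all add: sum.reindex inj_on_subset[OF inj])
    have "Gt a (words 1) (?P 1) (?Q 1) (\<lambda>i. if i \<in> ?S then 1 else 0) =
          Gt a UNIV \<rho> \<sigma> (\<lambda>i. if i \<in> \<Omega>0 then 1 else 0)"
      using Gt_ind[OF words_finite S, of a "?P 1" "?Q 1"] Gt_ind[of UNIV \<Omega>0 a \<rho> \<sigma>]
      unfolding cS sm by simp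
    also have "\<dots> = (\<Sum>i\<in>UNIV. FF a (\<rho> i) (\<sigma> i))"
      using diag_setup.part_sum[OF setup_UNIV[OF nn a], of \<Omega>0] h0 h1 by simp
    finally have "?R = hh a (Gt a (words 1) (?P 1) (?Q 1) (\<lambda>i. if i \<in> ?S then 1 else 0))"
      by (simp add: renyi_hh)
    also have "\<dots> \<le> ?D 1"
      by (rule diag_setup.D_test_ge_vertex[OF setup_words[OF nn a] S])
    finally show ?thesis .
  qed
  show ?thesis
    unfolding D_test_reg_def
  proof (rule antisym)
    show "(SUP n\<in>{1..}. ereal (1 / real n) * ?D n) \<le> ?R" by (rule SUP_least) (rule up)
    show "?R \<le> (SUP n\<in>{1..}. ereal (1 / real n) * ?D n)"
      by (rule SUP_upper2[of 1]) (use low in auto)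
  qed
qed

theorem mainTheorem10:
  fixes \<rho> \<sigma> :: "'a::finite \<Rightarrow> real"
  assumes "\<forall>\<omega>. 0 \<le> \<rho> \<omega>" and "sum \<rho> UNIV = 1"
    and "\<forall>\<omega>. 0 \<le> \<sigma> \<omega>" and "sum \<sigma> UNIV = 1"
  shows "((\<forall>\<alpha>\<in>{0<..<1}. D_test UNIV \<alpha> (diag_op \<rho>) (diag_op \<sigma>) = renyi_div UNIV \<alpha> \<rho> \<sigma>)
          \<longleftrightarrow> (\<exists>\<alpha>\<in>{0<..<1}. D_test UNIV \<alpha> (diag_op \<rho>) (diag_op \<sigma>) = renyi_div UNIV \<alpha> \<rho> \<sigma>))
       \<and> ((\<exists>\<alpha>\<in>{0<..<1}. D_test UNIV \<alpha> (diag_op \<rho>) (diag_op \<sigma>) = renyi_div UNIV \<alpha> \<rho> \<sigma>)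
          \<longleftrightarrow> (\<exists>\<Omega>0 \<Omega>1. \<Omega>1 = UNIV - \<Omega>0
                 \<and> (\<forall>\<omega>\<in>\<Omega>0. sum \<sigma> \<Omega>0 * \<rho> \<omega> = sum \<rho> \<Omega>0 * \<sigma> \<omega>)
                 \<and> (\<forall>\<omega>\<in>\<Omega>1. sum \<sigma> \<Omega>1 * \<rho> \<omega> = sum \<rho> \<Omega>1 * \<sigma> \<omega>)))
       \<and> ((\<forall>\<alpha>\<in>{0<..<1}. D_test UNIV \<alpha> (diag_op \<rho>) (diag_op \<sigma>) = renyi_div UNIV \<alpha> \<rho> \<sigma>)
          \<longrightarrow> (\<forall>\<alpha>\<in>{0<..<1}.
                 D_test UNIV \<alpha> (diag_op \<rho>) (diag_op \<sigma>) = D_test_reg \<alpha> (diag_op \<rho>) (diag_op \<sigma>)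
               \<and> D_test_reg \<alpha> (diag_op \<rho>) (diag_op \<sigma>) = renyi_div UNIV \<alpha> \<rho> \<sigma>))"
proof -
  let ?E = "\<lambda>\<alpha>. D_test UNIV \<alpha> (diag_op \<rho>) (diag_op \<sigma>) = renyi_div UNIV \<alpha> \<rho> \<sigma>"
  let ?C = "\<exists>\<Omega>0 \<Omega>1. \<Omega>1 = UNIV - \<Omega>0
                 \<and> (\<forall>\<omega>\<in>\<Omega>0. sum \<sigma> \<Omega>0 * \<rho> \<omega> = sum \<rho> \<Omega>0 * \<sigma> \<omega>)
                 \<and> (\<forall>\<omega>\<in>\<Omega>1. sum \<sigma> \<Omega>1 * \<rho> \<omega> = sum \<rho> \<Omega>1 * \<sigma> \<omega>)"
  have key: "?E \<alpha> \<longleftrightarrow> ?C" if "\<alpha> \<in> {0<..<1}" for \<alpha>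
  proof -
    have "0 < \<alpha>" "\<alpha> < 1" using that by auto
    from main_eq[OF assms(1) assms(3) this] show ?thesis .
  qed
  have half: "(1/2 :: real) \<in> {0<..<1}" by simp
  have P2: "(\<exists>\<alpha>\<in>{0<..<1}. ?E \<alpha>) \<longleftrightarrow> ?C"
  proof
    assume "\<exists>\<alpha>\<in>{0<..<1}. ?E \<alpha>"
    then obtain \<alpha> where "\<alpha> \<in> {0<..<1}" "?E \<alpha>" by blast
    then show ?C using key by blast
  next
    assume c: ?C
    have "?E (1/2)" using key[OF half] c by blast
    then show "\<exists>\<alpha>\<in>{0<..<1}. ?E \<alpha>" using half by blast
  qed
  have P1: "(\<forall>\<alpha>\<in>{0<..<1}. ?E \<alpha>) \<longleftrightarrow> (\<exists>\<alpha>\<in>{0<..<1}. ?E \<alpha>)"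
  proof
    assume "\<forall>\<alpha>\<in>{0<..<1}. ?E \<alpha>"
    then have "?E (1/2)" using half by blast
    then show "\<exists>\<alpha>\<in>{0<..<1}. ?E \<alpha>" using half by blast
  next
    assume "\<exists>\<alpha>\<in>{0<..<1}. ?E \<alpha>"
    then have c: ?C using P2 by blast
    show "\<forall>\<alpha>\<in>{0<..<1}. ?E \<alpha>"
    proof
      fix \<alpha> :: real assume "\<alpha> \<in> {0<..<1}"
      then show "?E \<alpha>" using key c by blast
    qed
  qed
  have P3: "D_test UNIV \<alpha> (diag_op \<rho>) (diag_op \<sigma>) = D_test_reg \<alpha> (diag_op \<rho>) (diag_op \<sigma>)
               \<and> D_test_reg \<alpha> (diag_op \<rho>) (diag_op \<sigma>) = renyi_div UNIV \<alpha> \<rho> \<sigma>"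
    if all: "\<forall>\<alpha>\<in>{0<..<1}. ?E \<alpha>" and al: "\<alpha> \<in> {0<..<1}" for \<alpha>
  proof -
    have "?E \<alpha>" using all al by blast
    then have "?C" using key[OF al] by blast
    then obtain \<Omega>0 where h0: "\<forall>\<omega>\<in>\<Omega>0. sum \<sigma> \<Omega>0 * \<rho> \<omega> = sum \<rho> \<Omega>0 * \<sigma> \<omega>"
      and h1: "\<forall>\<omega>\<in>UNIV - \<Omega>0. sum \<sigma> (UNIV - \<Omega>0) * \<rho> \<omega> = sum \<rho> (UNIV - \<Omega>0) * \<sigma> \<omega>"
      by blast
    have "D_test_reg \<alpha> (diag_op \<rho>) (diag_op \<sigma>) = renyi_div UNIV \<alpha> \<rho> \<sigma>"
    proof -
      have "0 < \<alpha>" "\<alpha> < 1" using al by auto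
      from reg_eq[OF assms(1) assms(3) this h0 h1] show ?thesis .
    qed
    moreover have "?E \<alpha>" using all al by blast
    ultimately show ?thesis by simp
  qed
  show ?thesis
  proof (intro conjI)
    show "(\<forall>\<alpha>\<in>{0<..<1}. ?E \<alpha>) \<longleftrightarrow> (\<exists>\<alpha>\<in>{0<..<1}. ?E \<alpha>)" by (rule P1)
    show "(\<exists>\<alpha>\<in>{0<..<1}. ?E \<alpha>) \<longleftrightarrow> ?C" by (rule P2)
    show "(\<forall>\<alpha>\<in>{0<..<1}. ?E \<alpha>) \<longrightarrow> (\<forall>\<alpha>\<in>{0<..<1}.
                 D_test UNIV \<alpha> (diag_op \<rho>) (diag_op \<sigma>) = D_test_reg \<alpha> (diag_op \<rho>) (diag_op \<sigma>)
               \<and> D_test_reg \<alpha> (diag_op \<rho>) (diag_op \<sigma>) = renyi_div UNIV \<alpha> \<rho> \<sigma>)"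
      using P3 by blast
  qed
qed

end
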